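(* In the Part I procedure, consider a growth step in phase $\Delta$ out of an even vertex $x$ to an unlabelled vertex $y$, which adds $y$ (odd) and $\mathit{mate}(y)$ (even) to $S$. Let $z$ be any even vertex in $S$ adjacent to $\mathit{mate}(y)$. Then $\mathrm{lcp}(z)\ge\mathrm{lcp}(x)$; in particular $\mathrm{lcp}(z)+\mathrm{lcp}(\mathit{mate}(y))\ge 2\Delta-2$.
   Context: Let $G=(V,E)$ be a finite undirected graph and $M$ a matching in $G$; free vertices and $\mathit{mate}(v)$ are as usual. The Part I procedure maintains a search structure $S$: a forest whose nodes are either single (odd) vertices or blossoms (disjoint vertex sets with a distinguished base vertex), each tree rooted at a blossom containing a free vertex. Vertices in $S$ are labelled even (those in blossoms) or odd; vertices not in $S$ are unlabelled. A vertex is born even/odd according to the label it receives when inserted. The procedure maintains $\mathrm{lcp}(v)$ for even vertices and $\mathrm{lcp}_{\mathrm{odd}}(v)$ for vertices born odd. The blossom nodes currently in $S$ are the maximal blossoms. Phase $0$: every free vertex $v$ becomes the root of its own tree as a trivial blossom $\{v\}$ with base $v$, even, $\mathrm{lcp}(v)=0$. For $\Delta=1,2,\dots$, phase $\Delta$ does: (i) if $\Delta$ is even, growth steps: while some even vertex $v$ with $\mathrm{lcp}(v)=\Delta-2$ has a neighbour $x$ not in $S$, add $x$ as an odd child of the blossom containing $v$ with $\mathrm{lcp}_{\mathrm{odd}}(x)=\Delta-1$, and $\mathit{mate}(x)$ as a child of $x$, as a trivial even blossom with $\mathrm{lcp}(\mathit{mate}(x))=\Delta$; (ii) bridge steps: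 while there is a non-matching edge $xy$ with $x,y$ even, in different maximal blossoms $B_x,B_y$, and $\mathrm{lcp}(x)+\mathrm{lcp}(y)=2\Delta-2$: if $B_x,B_y$ lie in different trees the procedure stops; otherwise let $B$ be the lowest common ancestor of $B_x,B_y$; every odd vertex $z$ on the tree paths from $B_x$ and $B_y$ to $B$ becomes even with $\mathrm{lcp}(z)=\mathrm{lcp}(x)+1+\mathrm{lcp}(y)-\mathrm{lcp}_{\mathrm{odd}}(z)$, and $B$ together with all blossoms and odd vertices on both paths is merged into one new blossom with base equal to the base of $B$, replacing $B$ in the tree. *)

theory Defs
  imports Main
begin

definition graph :: "'a set \<Rightarrow> 'a set set \<Rightarrow> bool" where
  "graph V E \<longleftrightarrow> finite V \<and>
     (\<forall>e\<in>E. \<exists>u v. e = {u, v} \<and> u \<noteq> v \<and> u \<in> V \<and> v \<in> V)"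

definition matching :: "'a set set \<Rightarrow> 'a set set \<Rightarrow> bool" where
  "matching E M \<longleftrightarrow> M \<subseteq> E \<and> (\<forall>e1\<in>M. \<forall>e2\<in>M. e1 \<noteq> e2 \<longrightarrow> e1 \<inter> e2 = {})"

definition free :: "'a set \<Rightarrow> 'a set set \<Rightarrow> 'a \<Rightarrow> bool" where
  "free V M v \<longleftrightarrow> v \<in> V \<and> v \<notin> \<Union>M"

definition mate :: "'a set set \<Rightarrow> 'a \<Rightarrow> 'a" where
  "mate M v = (THE u. {u, v} \<in> M)"

datatype stage = Grow | Bridge | Stopped

text \<open>Nodes of the search forest are disjoint vertex sets: an odd vertex v is the node {v};
  a blossom is the set of its vertices. par gives the parent node (None for roots).
  evens/odds are the labelled vertices; lcp is meaningful for even vertices,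
  lcpo for vertices born odd. delta is the current phase, stg the part of the phase.\<close>

record 'a sstate =
  delta :: nat
  stg :: stage
  nodes :: "'a set set"
  par :: "'a set \<Rightarrow> 'a set option"
  base :: "'a set \<Rightarrow> 'a"
  evens :: "'a set"
  odds :: "'a set"
  lcp :: "'a \<Rightarrow> nat"
  lcpo :: "'a \<Rightarrow> nat"

definition inS :: "'a sstate \<Rightarrow> 'a \<Rightarrow> bool" where
  "inS s v \<longleftrightarrow> v \<in> \<Union>(nodes s)"

definition node_of :: "'a sstate \<Rightarrow> 'a \<Rightarrow> 'a set" where
  "node_of s v = (THE N. N \<in> nodes s \<and> v \<in> N)"

definition parent_rel :: "'a sstate \<Rightarrow> 'a set \<Rightarrow> 'a set \<Rightarrow> bool" where
  "parent_rel s N P \<longleftrightarrow> N \<in> nodes s \<and> par s N = Some P"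

definition anc :: "'a sstate \<Rightarrow> 'a set \<Rightarrow> 'a set \<Rightarrow> bool" where
  "anc s A N \<longleftrightarrow> (parent_rel s)\<^sup>*\<^sup>* N A"

definition is_lca :: "'a sstate \<Rightarrow> 'a set \<Rightarrow> 'a set \<Rightarrow> 'a set \<Rightarrow> bool" where
  "is_lca s B N1 N2 \<longleftrightarrow> B \<in> nodes s \<and> anc s B N1 \<and> anc s B N2 \<and>
     (\<forall>C. anc s C N1 \<and> anc s C N2 \<longrightarrow> anc s C B)"

definition same_tree :: "'a sstate \<Rightarrow> 'a set \<Rightarrow> 'a set \<Rightarrow> bool" where
  "same_tree s N1 N2 \<longleftrightarrow> (\<exists>C. anc s C N1 \<and> anc s C N2)"

definition init :: "'a set \<Rightarrow> 'a set set \<Rightarrow> 'a sstate" where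
  "init V M = \<lparr> delta = 1, stg = Grow,
     nodes = {{v} | v. free V M v},
     par = (\<lambda>_. None),
     base = (\<lambda>N. SOME v. v \<in> N),
     evens = {v. free V M v}, odds = {},
     lcp = (\<lambda>_. 0), lcpo = (\<lambda>_. 0) \<rparr>"

definition grow_update :: "'a set set \<Rightarrow> 'a sstate \<Rightarrow> 'a \<Rightarrow> 'a \<Rightarrow> 'a sstate" where
  "grow_update M s x y =
     s\<lparr> nodes := nodes s \<union> {{y}, {mate M y}},
        par := (par s)({y} := Some (node_of s x), {mate M y} := Some {y}),
        base := (base s)({mate M y} := mate M y),
        odds := insert y (odds s),
        evens := insert (mate M y) (evens s),
        lcpo := (lcpo s)(y := delta s - 1),
        lcp := (lcp s)(mate M y := delta s) \<rparr>"

definition grow_enabled :: "'a set set \<Rightarrow> 'a sstate \<Rightarrow> 'a \<Rightarrow> 'a \<Rightarrow> bool" where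
  "grow_enabled E s x y \<longleftrightarrow> stg s = Grow \<and> even (delta s) \<and>
     x \<in> evens s \<and> lcp s x + 2 = delta s \<and> {x, y} \<in> E \<and> \<not> inS s y"

definition grow_step :: "'a set set \<Rightarrow> 'a set set \<Rightarrow> 'a sstate \<Rightarrow> 'a \<Rightarrow> 'a \<Rightarrow> 'a sstate \<Rightarrow> bool" where
  "grow_step E M s x y s' \<longleftrightarrow> grow_enabled E s x y \<and> s' = grow_update M s x y"

definition bridge_enabled :: "'a set set \<Rightarrow> 'a set set \<Rightarrow> 'a sstate \<Rightarrow> 'a \<Rightarrow> 'a \<Rightarrow> bool" where
  "bridge_enabled E M s x y \<longleftrightarrow> stg s = Bridge \<and> {x, y} \<in> E \<and> {x, y} \<notin> M \<and>
     x \<in> evens s \<and> y \<in> evens s \<and> node_of s x \<noteq> node_of s y \<and>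
     lcp s x + lcp s y + 2 = 2 * delta s"

definition on_paths :: "'a sstate \<Rightarrow> 'a set \<Rightarrow> 'a set \<Rightarrow> 'a set \<Rightarrow> 'a set set" where
  "on_paths s B N1 N2 = {N \<in> nodes s. (anc s N N1 \<or> anc s N N2) \<and> anc s B N}"

definition merge :: "'a sstate \<Rightarrow> 'a set \<Rightarrow> 'a \<Rightarrow> 'a \<Rightarrow> 'a sstate" where
  "merge s B x y =
     (let P = on_paths s B (node_of s x) (node_of s y);
          Bn = \<Union>P;
          Z = odds s \<inter> Bn
      in s\<lparr> nodes := (nodes s - P) \<union> {Bn},
            par := (\<lambda>N. if N = Bn then par s B
                        else (case par s N of None \<Rightarrow> None
                              | Some Q \<Rightarrow> if Q \<in> P then Some Bn else Some Q)),
            base := (base s)(Bn := base s B),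
            evens := evens s \<union> Z,
            odds := odds s - Z,
            lcp := (\<lambda>v. if v \<in> Z then lcp s x + 1 + lcp s y - lcpo s v else lcp s v) \<rparr>)"

inductive step :: "'a set set \<Rightarrow> 'a set set \<Rightarrow> 'a sstate \<Rightarrow> 'a sstate \<Rightarrow> bool"
  for E M where
  grow: "grow_step E M s x y s' \<Longrightarrow> step E M s s'"
| end_growth: "stg s = Grow \<Longrightarrow> \<not> (\<exists>x y. grow_enabled E s x y) \<Longrightarrow>
     step E M s (s\<lparr>stg := Bridge\<rparr>)"
| bridge: "bridge_enabled E M s x y \<Longrightarrow> same_tree s (node_of s x) (node_of s y) \<Longrightarrow>
     is_lca s B (node_of s x) (node_of s y) \<Longrightarrow> step E M s (merge s B x y)"
| stop: "bridge_enabled E M s x y \<Longrightarrow> \<not> same_tree s (node_of s x) (node_of s y) \<Longrightarrow>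
     step E M s (s\<lparr>stg := Stopped\<rparr>)"
| next_phase: "stg s = Bridge \<Longrightarrow> \<not> (\<exists>x y. bridge_enabled E M s x y) \<Longrightarrow>
     step E M s (s\<lparr>delta := delta s + 1, stg := Grow\<rparr>)"

definition reachable :: "'a set \<Rightarrow> 'a set set \<Rightarrow> 'a set set \<Rightarrow> 'a sstate \<Rightarrow> bool" where
  "reachable V E M s \<longleftrightarrow> (step E M)\<^sup>*\<^sup>* (init V M) s"

end

theory Submission
  imports Defs
begin

definition inv :: "'a set \<Rightarrow> 'a set set \<Rightarrow> 'a set set \<Rightarrow> 'a sstate \<Rightarrow> bool" where
 "inv V E M s \<longleftrightarrow>
 (\<forall>v. free V M v \<longrightarrow> inS s v) \<and>
 (\<forall>e\<in>M. \<forall>v\<in>e. inS s v \<longrightarrow> (\<forall>w\<in>e. inS s w)) \<and>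
 (\<forall>v\<in>evens s. inS s v) \<and>
 (\<forall>v\<in>evens s. (lcp s v + 2 < delta s \<or> (lcp s v + 2 = delta s \<and> stg s \<noteq> Grow \<and> even (delta s)))
     \<longrightarrow> (\<forall>w. {v,w} \<in> E \<longrightarrow> inS s w)) \<and>
 (\<forall>v\<in>evens s. even (lcp s v)) \<and>
 (\<forall>v\<in>odds s. lcpo s v + 1 \<le> delta s \<and> odd (lcpo s v)) \<and>
 delta s \<ge> 1"

lemma invD1: "inv V E M s \<Longrightarrow> free V M v \<Longrightarrow> inS s v" unfolding inv_def by blast
lemma invD2: "inv V E M s \<Longrightarrow> e \<in> M \<Longrightarrow> v \<in> e \<Longrightarrow> inS s v \<Longrightarrow> w \<in> e \<Longrightarrow> inS s w" unfolding inv_def by blast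
lemma invD3: "inv V E M s \<Longrightarrow> v \<in> evens s \<Longrightarrow> inS s v" unfolding inv_def by blast
lemma invD4: "inv V E M s \<Longrightarrow> v \<in> evens s \<Longrightarrow>
   lcp s v + 2 < delta s \<or> (lcp s v + 2 = delta s \<and> stg s \<noteq> Grow \<and> even (delta s)) \<Longrightarrow>
   {v,w} \<in> E \<Longrightarrow> inS s w" unfolding inv_def by blast
lemma invD5: "inv V E M s \<Longrightarrow> v \<in> evens s \<Longrightarrow> even (lcp s v)" unfolding inv_def by blast
lemma invD6: "inv V E M s \<Longrightarrow> v \<in> odds s \<Longrightarrow> lcpo s v + 1 \<le> delta s \<and> odd (lcpo s v)" unfolding inv_def by blast
lemma invD7: "inv V E M s \<Longrightarrow> delta s \<ge> 1" unfolding inv_def by blast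

lemma mate_eq:
  assumes "matching E M" "{u,y} \<in> M" shows "mate M y = u"
  unfolding mate_def
proof (rule the_equality)
  show "{u,y} \<in> M" by fact
  fix w assume w: "{w,y} \<in> M"
  have disj: "\<forall>e1\<in>M. \<forall>e2\<in>M. e1 \<noteq> e2 \<longrightarrow> e1 \<inter> e2 = {}"
    using assms(1) by (simp add: matching_def)
  have ne: "{w,y} \<inter> {u,y} \<noteq> {}" by simp
  have eq: "{w,y} = {u,y}"
  proof (rule ccontr)
    assume "{w,y} \<noteq> {u,y}"
    then have "{w,y} \<inter> {u,y} = {}" using disj w assms(2) by metis
    then show False using ne by contradiction
  qed
  then show "w = u" unfolding doubleton_eq_iff by metis
qed

lemma grow_partner:
  assumes g: "graph V E" and m: "matching E M" and i: "inv V E M s"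
    and ge: "grow_enabled E s x y"
  shows "{mate M y, y} \<in> M \<and> \<not> inS s (mate M y) \<and> \<not> inS s y \<and> mate M y \<noteq> y"
proof -
  have xyE: "{x,y} \<in> E" using ge unfolding grow_enabled_def by blast
  obtain p q where pq: "{x,y} = {p,q}" "p \<in> V" "q \<in> V"
    using g xyE unfolding graph_def by blast
  have "y \<in> {p,q}" using pq(1) by (metis insertCI)
  then have yV: "y \<in> V" using pq by blast
  have ny: "\<not> inS s y" using ge unfolding grow_enabled_def by blast
  then have "\<not> free V M y" using invD1[OF i] by blast
  then obtain e where e: "e \<in> M" "y \<in> e" using yV unfolding free_def by blast
  then have "e \<in> E" using m unfolding matching_def by blast
  then obtain a b where ab: "e = {a,b}" "a \<noteq> b" using g unfolding graph_def by blast
  have "\<exists>u. {u,y} \<in> M \<and> u \<noteq> y"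
  proof (cases "y = a")
    case True
    then have "{b,y} \<in> M" using e ab by (simp add: insert_commute)
    then show ?thesis using ab True by blast
  next
    case False
    then have "y = b" using e ab by simp
    then have "{a,y} \<in> M" "a \<noteq> y" using e ab by simp_all
    then show ?thesis by blast
  qed
  then obtain u where u: "{u,y} \<in> M" "u \<noteq> y" by blast
  have mu: "mate M y = u" using mate_eq[OF m u(1)] .
  have "\<not> inS s u" using invD2[OF i u(1)] ny by blast
  then show ?thesis using u mu ny by simp
qed

lemma inS_grow: "inS (grow_update M s x y) w \<longleftrightarrow> inS s w \<or> w = y \<or> w = mate M y"
  unfolding inS_def grow_update_def by auto

lemma merge_simps:
  "delta (merge s B a b) = delta s"
  "stg (merge s B a b) = stg s"
  "evens (merge s B a b) = evens s \<union> (odds s \<inter> \<Union>(on_paths s B (node_of s a) (node_of s b)))"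
  "odds (merge s B a b) = odds s - (odds s \<inter> \<Union>(on_paths s B (node_of s a) (node_of s b)))"
  "lcpo (merge s B a b) = lcpo s"
  "lcp (merge s B a b) v = (if v \<in> odds s \<inter> \<Union>(on_paths s B (node_of s a) (node_of s b))
      then lcp s a + 1 + lcp s b - lcpo s v else lcp s v)"
  "nodes (merge s B a b) = (nodes s - on_paths s B (node_of s a) (node_of s b)) \<union> {\<Union>(on_paths s B (node_of s a) (node_of s b))}"
  by (simp_all add: merge_def Let_def)

lemma inS_merge: "inS (merge s B a b) w \<longleftrightarrow> inS s w"
proof -
  have "on_paths s B (node_of s a) (node_of s b) \<subseteq> nodes s" unfolding on_paths_def by blast
  then show ?thesis unfolding inS_def merge_simps by blast
qed

lemma inv_init: "inv V E M (init V M)"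
  unfolding inv_def init_def inS_def free_def by auto

lemma inv_step:
  assumes g: "graph V E" and m: "matching E M" and st: "step E M s s'" and i: "inv V E M s"
  shows "inv V E M s'"
  using st
proof cases
  case (grow x y)
  then have ge: "grow_enabled E s x y" and s': "s' = grow_update M s x y"
    unfolding grow_step_def by auto
  note p = grow_partner[OF g m i ge]
  define u where "u = mate M y"
  have uy: "{u,y} \<in> M" "\<not> inS s u" "\<not> inS s y" "u \<noteq> y" using p u_def by auto
  have d: "delta s' = delta s" "stg s' = stg s" "evens s' = insert u (evens s)"
    "odds s' = insert y (odds s)" "lcp s' = (lcp s)(u := delta s)" "lcpo s' = (lcpo s)(y := delta s - 1)"
    using s' u_def by (simp_all add: grow_update_def)
  have iS: "inS s' w \<longleftrightarrow> inS s w \<or> w = y \<or> w = u" for w using s' inS_grow u_def by metis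
  have dE: "even (delta s)" "delta s \<ge> 1" using ge invD7[OF i] unfolding grow_enabled_def by auto
  have I2: "\<forall>e\<in>M. \<forall>v\<in>e. inS s' v \<longrightarrow> (\<forall>w\<in>e. inS s' w)"
  proof (intro ballI impI)
    fix e v w assume e: "e \<in> M" "v \<in> e" "inS s' v" "w \<in> e"
    show "inS s' w"
    proof (cases "inS s v")
      case True then show ?thesis using invD2[OF i e(1,2) True e(4)] iS by blast
    next
      case False
      then have "v = y \<or> v = u" using iS e by blast
      then have "e \<inter> {u,y} \<noteq> {}" using e by blast
      moreover have "\<forall>e1\<in>M. \<forall>e2\<in>M. e1 \<noteq> e2 \<longrightarrow> e1 \<inter> e2 = {}" using m unfolding matching_def by blast
      ultimately have "e = {u,y}" using e(1) uy(1) by metis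
      then show ?thesis using e iS by blast
    qed
  qed
  show ?thesis unfolding inv_def
  proof (intro conjI)
    show "\<forall>v. free V M v \<longrightarrow> inS s' v" using invD1[OF i] iS by blast
    show "\<forall>e\<in>M. \<forall>v\<in>e. inS s' v \<longrightarrow> (\<forall>w\<in>e. inS s' w)" by (rule I2)
    show "\<forall>v\<in>evens s'. inS s' v" using invD3[OF i] iS d by auto
    show "\<forall>v\<in>evens s'. (lcp s' v + 2 < delta s' \<or> (lcp s' v + 2 = delta s' \<and> stg s' \<noteq> Grow \<and> even (delta s')))
     \<longrightarrow> (\<forall>w. {v,w} \<in> E \<longrightarrow> inS s' w)"
    proof (intro ballI impI allI)
      fix v w assume v: "v \<in> evens s'" and h: "lcp s' v + 2 < delta s' \<or> (lcp s' v + 2 = delta s' \<and> stg s' \<noteq> Grow \<and> even (delta s'))"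
        and vw: "{v,w} \<in> E"
      have "v \<noteq> u" using h d by auto
      then have "v \<in> evens s" "lcp s' v = lcp s v" using v d by auto
      then show "inS s' w" using invD4[OF i _ _ vw] h d iS by metis
    qed
    show "\<forall>v\<in>evens s'. even (lcp s' v)" using invD5[OF i] d dE by auto
    show "\<forall>v\<in>odds s'. lcpo s' v + 1 \<le> delta s' \<and> odd (lcpo s' v)" using invD6[OF i] d dE by auto
    show "delta s' \<ge> 1" using d dE by simp
  qed
next
  case end_growth
  have "inv V E M s'"
    unfolding inv_def
  proof (intro conjI)
    show "\<forall>v\<in>evens s'. (lcp s' v + 2 < delta s' \<or> (lcp s' v + 2 = delta s' \<and> stg s' \<noteq> Grow \<and> even (delta s')))
     \<longrightarrow> (\<forall>w. {v,w} \<in> E \<longrightarrow> inS s' w)"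
    proof (intro ballI impI allI)
      fix v w assume v: "v \<in> evens s'" and h: "lcp s' v + 2 < delta s' \<or> (lcp s' v + 2 = delta s' \<and> stg s' \<noteq> Grow \<and> even (delta s'))"
        and vw: "{v,w} \<in> E"
      have v': "v \<in> evens s" "lcp s' v = lcp s v" "delta s' = delta s" "stg s = Grow"
        "\<And>w. inS s' w = inS s w"
        using v end_growth by (auto simp: inS_def)
      show "inS s' w"
      proof (cases "lcp s v + 2 < delta s")
        case True
        then show ?thesis using invD4[OF i v'(1) _ vw] v' by blast
      next
        case False
        then have "lcp s v + 2 = delta s" "even (delta s)" using h v' by auto
        moreover have "\<not> grow_enabled E s v w" using end_growth by blast
        ultimately show ?thesis using v' vw unfolding grow_enabled_def by simp
      qed
    qed
  next
    have f: "evens s' = evens s" "odds s' = odds s" "lcpo s' = lcpo s" "lcp s' = lcp s"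
      "delta s' = delta s" "\<And>w. inS s' w = inS s w"
      using end_growth by (auto simp: inS_def)
    show "\<forall>v. free V M v \<longrightarrow> inS s' v" using invD1[OF i] unfolding f by blast
    show "\<forall>e\<in>M. \<forall>v\<in>e. inS s' v \<longrightarrow> (\<forall>w\<in>e. inS s' w)" using invD2[OF i] unfolding f by blast
    show "\<forall>v\<in>evens s'. inS s' v" using invD3[OF i] unfolding f by blast
    show "\<forall>v\<in>evens s'. even (lcp s' v)" using invD5[OF i] unfolding f by blast
    show "\<forall>v\<in>odds s'. lcpo s' v + 1 \<le> delta s' \<and> odd (lcpo s' v)" using invD6[OF i] unfolding f by blast
    show "delta s' \<ge> 1" using invD7[OF i] unfolding f .
  qed
  then show ?thesis .
next
  case (bridge a b B)
  have be: "lcp s a + lcp s b + 2 = 2 * delta s" using bridge(2) unfolding bridge_enabled_def by blast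
  define Z where "Z = odds s \<inter> \<Union>(on_paths s B (node_of s a) (node_of s b))"
  have d: "delta s' = delta s" "stg s' = stg s" "evens s' = evens s \<union> Z" "odds s' = odds s - Z"
     "lcpo s' = lcpo s" "\<And>v. lcp s' v = (if v \<in> Z then lcp s a + 1 + lcp s b - lcpo s v else lcp s v)"
     "\<And>w. inS s' w = inS s w"
    using bridge(1) by (simp_all add: merge_simps inS_merge Z_def)
  have Zl: "lcp s' v \<ge> delta s \<and> even (lcp s' v)" if "v \<in> Z" for v
  proof -
    have "lcpo s v + 1 \<le> delta s" "odd (lcpo s v)" "delta s \<ge> 1" using invD6[OF i, of v] invD7[OF i] that unfolding Z_def by auto
    then obtain k where k: "lcpo s v = 2*k+1" by (auto elim!: oddE)
    have "lcp s' v = 2 * (delta s - 1 - k)" using d(6)[of v] that be k \<open>lcpo s v + 1 \<le> delta s\<close> by simp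
    then show ?thesis using k \<open>lcpo s v + 1 \<le> delta s\<close> by simp
  qed
  show ?thesis unfolding inv_def
  proof (intro conjI)
    show "\<forall>v. free V M v \<longrightarrow> inS s' v" using invD1[OF i] invD2[OF i] unfolding d(7) by blast
    show "\<forall>e\<in>M. \<forall>v\<in>e. inS s' v \<longrightarrow> (\<forall>w\<in>e. inS s' w)" using invD1[OF i] invD2[OF i] unfolding d(7) by blast
    have "Z \<subseteq> \<Union>(nodes s)" unfolding Z_def on_paths_def by blast
    then show "\<forall>v\<in>evens s'. inS s' v" using i unfolding inv_def d(7) d(3) by (auto simp: inS_def)
    show "\<forall>v\<in>evens s'. (lcp s' v + 2 < delta s' \<or> (lcp s' v + 2 = delta s' \<and> stg s' \<noteq> Grow \<and> even (delta s')))
     \<longrightarrow> (\<forall>w. {v,w} \<in> E \<longrightarrow> inS s' w)"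
    proof (intro ballI impI allI)
      fix v w assume v: "v \<in> evens s'" and h: "lcp s' v + 2 < delta s' \<or> (lcp s' v + 2 = delta s' \<and> stg s' \<noteq> Grow \<and> even (delta s'))"
        and vw: "{v,w} \<in> E"
      have "v \<notin> Z" using h d Zl by fastforce
      then have "v \<in> evens s" "lcp s' v = lcp s v" using v d by auto
      then show "inS s' w" using invD4[OF i _ _ vw] h d by metis
    qed
    show "\<forall>v\<in>evens s'. even (lcp s' v)" using invD5[OF i] d Zl by auto
    show "\<forall>v\<in>odds s'. lcpo s' v + 1 \<le> delta s' \<and> odd (lcpo s' v)" using invD6[OF i] d by auto
    show "delta s' \<ge> 1" using d invD7[OF i] by simp
  qed
next
  case (stop a b)
  have be0: "bridge_enabled E M s a b" using stop by simp
  have sb: "stg s = Bridge" using be0 unfolding bridge_enabled_def by simp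
  have f0: "evens s' = evens s" "odds s' = odds s" "lcp s' = lcp s" "lcpo s' = lcpo s"
    "delta s' = delta s" "nodes s' = nodes s"
    using stop(1) by simp_all
  have f: "evens s' = evens s" "odds s' = odds s" "lcp s' = lcp s" "lcpo s' = lcpo s"
    "delta s' = delta s" "stg s = Bridge" "\<And>w. inS s' w = inS s w"
    using f0 sb unfolding inS_def by simp_all
  show "inv V E M s'"
    unfolding inv_def f
  proof (intro conjI)
    show "\<forall>v\<in>evens s. (lcp s v + 2 < delta s \<or> (lcp s v + 2 = delta s \<and> stg s' \<noteq> Grow \<and> even (delta s)))
     \<longrightarrow> (\<forall>w. {v,w} \<in> E \<longrightarrow> inS s w)"
    proof (intro ballI impI allI)
      fix v w assume "v \<in> evens s" "lcp s v + 2 < delta s \<or> (lcp s v + 2 = delta s \<and> stg s' \<noteq> Grow \<and> even (delta s))" "{v,w} \<in> E"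
      then show "inS s w" using invD4[OF i, of v w] f(6) by auto
    qed
    show "\<forall>v. free V M v \<longrightarrow> inS s v" using invD1[OF i] by blast
    show "\<forall>e\<in>M. \<forall>v\<in>e. inS s v \<longrightarrow> (\<forall>w\<in>e. inS s w)" using invD2[OF i] by blast
    show "\<forall>v\<in>evens s. inS s v" using invD3[OF i] by blast
    show "\<forall>v\<in>evens s. even (lcp s v)" using invD5[OF i] by blast
    show "\<forall>v\<in>odds s. lcpo s v + 1 \<le> delta s \<and> odd (lcpo s v)" using invD6[OF i] by blast
    show "delta s \<ge> 1" using invD7[OF i] .
  qed
next
  case next_phase
  have "inv V E M s'"
    unfolding inv_def
  proof (intro conjI)
    show "\<forall>v\<in>evens s'. (lcp s' v + 2 < delta s' \<or> (lcp s' v + 2 = delta s' \<and> stg s' \<noteq> Grow \<and> even (delta s')))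
     \<longrightarrow> (\<forall>w. {v,w} \<in> E \<longrightarrow> inS s' w)"
    proof (intro ballI impI allI)
      fix v w assume v: "v \<in> evens s'" and h: "lcp s' v + 2 < delta s' \<or> (lcp s' v + 2 = delta s' \<and> stg s' \<noteq> Grow \<and> even (delta s'))"
        and vw: "{v,w} \<in> E"
      have v': "v \<in> evens s" "lcp s' v = lcp s v" "delta s' = delta s + 1" "stg s = Bridge" "stg s' = Grow"
        using v next_phase by auto
      have ev: "even (lcp s v + 2)" using invD5[OF i] v' by auto
      have le: "lcp s v + 2 \<le> delta s" using h v' by auto
      have "lcp s v + 2 < delta s \<or> (lcp s v + 2 = delta s \<and> stg s \<noteq> Grow \<and> even (delta s))"
      proof (cases "lcp s v + 2 < delta s")
        case False
        then have "lcp s v + 2 = delta s" using le by simp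
        then show ?thesis using ev v' by simp
      qed simp
      then have "inS s w" using invD4[OF i v'(1) _ vw] by blast
      then show "inS s' w" using next_phase unfolding inS_def by simp
    qed
  next
    have f: "evens s' = evens s" "odds s' = odds s" "lcpo s' = lcpo s" "lcp s' = lcp s"
      "delta s' = delta s + 1" "\<And>w. inS s' w = inS s w"
      using next_phase by (auto simp: inS_def)
    show "\<forall>v. free V M v \<longrightarrow> inS s' v" using invD1[OF i] unfolding f by blast
    show "\<forall>e\<in>M. \<forall>v\<in>e. inS s' v \<longrightarrow> (\<forall>w\<in>e. inS s' w)" using invD2[OF i] unfolding f by blast
    show "\<forall>v\<in>evens s'. inS s' v" using invD3[OF i] unfolding f by blast
    show "\<forall>v\<in>evens s'. even (lcp s' v)" using invD5[OF i] unfolding f by blast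
    show "\<forall>v\<in>odds s'. lcpo s' v + 1 \<le> delta s' \<and> odd (lcpo s' v)" using invD6[OF i] unfolding f by fastforce
    show "delta s' \<ge> 1" unfolding f by simp
  qed
  then show ?thesis .
qed

lemma reach_inv:
  assumes "graph V E" "matching E M" "reachable V E M s" shows "inv V E M s"
proof -
  have "(step E M)\<^sup>*\<^sup>* (init V M) s" using assms(3) unfolding reachable_def .
  then show ?thesis
  proof (induction rule: rtranclp_induct)
    case base
    then show ?case by (rule inv_init)
  next
    case (step t u)
    then show ?case using inv_step[OF assms(1,2)] by blast
  qed
qed

theorem lemma6:
  assumes "graph V E" and "matching E M"
    and "reachable V E M s"
    and "grow_step E M s x y s'"
    and "z \<in> evens s'" and "{z, mate M y} \<in> E"
  shows "lcp s' z \<ge> lcp s' x \<and> lcp s' z + lcp s' (mate M y) + 2 \<ge> 2 * delta s'"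
proof -
  have i: "inv V E M s" using reach_inv assms(1-3) .
  have ge: "grow_enabled E s x y" and s': "s' = grow_update M s x y"
    using assms(4) unfolding grow_step_def by auto
  note p = grow_partner[OF assms(1,2) i ge]
  define u where "u = mate M y"
  have nu: "\<not> inS s u" "{u,y} \<in> M" "\<not> inS s y" using p u_def by auto
  have zu: "z \<noteq> u" using assms(1,6) u_def unfolding graph_def by fastforce
  have xS: "inS s x" using invD3[OF i] ge unfolding grow_enabled_def by blast
  then have xu: "x \<noteq> u" using nu by auto
  have d: "delta s' = delta s" "evens s' = insert u (evens s)" "lcp s' = (lcp s)(u := delta s)"
    using s' u_def by (simp_all add: grow_update_def)
  have zE: "z \<in> evens s" using assms(5) d zu by auto
  have lx: "lcp s x + 2 = delta s" using ge unfolding grow_enabled_def by auto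
  have key: "lcp s z + 2 \<ge> delta s"
  proof (rule ccontr)
    assume "\<not> ?thesis"
    then have "inS s u" using invD4[OF i zE _ assms(6)] u_def by (metis not_le)
    then show False using nu by simp
  qed
  show ?thesis using key lx d zu xu u_def by auto
qed

end
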